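(* Let $Q\in\mathbb{C}[x,y,z]$ be a homogeneous polynomial of degree $4$ that is $G_8$-invariant, i.e. $Q(\pm x,\pm y,\pm z)=Q(x,y,z)$ for all choices of signs, and suppose that the plane quartic $C: Q=0$ in $\mathbb{P}^2_{\mathbb{C}}$ is irreducible. If $$\mathrm{Hess}(Q)=\det\Big[\frac{\partial^2 Q}{\partial x_i\partial x_j}\Big]_{i,j}=x^2y^2z^2$$ as polynomials (with $(x_1,x_2,x_3)=(x,y,z)$), then $Q(x,y,z)=Ax^4+By^4+Cz^4$ for some $A,B,C\in\mathbb{C}$ with $ABC=\frac{1}{1728}$.
   Context: $G_8\cong\mathbb{Z}_2^3$ acts on $\mathbb{C}[x,y,z]$ through the diagonal matrices $\mathrm{Diag}(a,b,c)$, $a,b,c\in\{-1,1\}$, by $f\mapsto f(ax,by,cz)$. Consequently every $G_8$-invariant quartic form has the shape $Ax^4+By^4+Cz^4+Dx^2y^2+Ex^2z^2+Fy^2z^2$ with $A,\dots,F\in\mathbb{C}$. *)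

theory Defs
  imports "HOL-Analysis.Analysis"
begin

text \<open>A ternary form (homogeneous polynomial) of degree n over the complex numbers,
  given by its coefficients: c i j is the coefficient of x^i y^j z^(n-i-j).\<close>
definition form3 :: "nat \<Rightarrow> (nat \<Rightarrow> nat \<Rightarrow> complex) \<Rightarrow> complex \<Rightarrow> complex \<Rightarrow> complex \<Rightarrow> complex" where
  "form3 n c x y z = (\<Sum>i\<le>n. \<Sum>j\<le>n - i. c i j * x ^ i * y ^ j * z ^ (n - i - j))"

text \<open>Irreducibility of a nonzero form of degree n: it is not a product of two forms of
  positive degrees (any factorisation of a form has homogeneous factors).
  Equality of polynomials over the infinite field C is equality as functions.\<close>
definition irreducible_form3 :: "nat \<Rightarrow> (nat \<Rightarrow> nat \<Rightarrow> complex) \<Rightarrow> bool" where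
  "irreducible_form3 n c \<longleftrightarrow>
     (\<exists>x y z. form3 n c x y z \<noteq> 0) \<and>
     \<not> (\<exists>d a b. 0 < d \<and> d < n \<and>
           (\<forall>x y z. form3 n c x y z = form3 d a x y z * form3 (n - d) b x y z))"

definition pd3 :: "nat \<Rightarrow> (complex \<Rightarrow> complex \<Rightarrow> complex \<Rightarrow> complex) \<Rightarrow> complex \<Rightarrow> complex \<Rightarrow> complex \<Rightarrow> complex" where
  "pd3 i f x y z =
     (if i = 0 then deriv (\<lambda>t. f t y z) x
      else if i = 1 then deriv (\<lambda>t. f x t z) y
      else deriv (\<lambda>t. f x y t) z)"

definition det3 :: "(nat \<Rightarrow> nat \<Rightarrow> complex) \<Rightarrow> complex" where
  "det3 M = M 0 0 * (M 1 1 * M 2 2 - M 1 2 * M 2 1)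
          - M 0 1 * (M 1 0 * M 2 2 - M 1 2 * M 2 0)
          + M 0 2 * (M 1 0 * M 2 1 - M 1 1 * M 2 0)"

definition hess3 :: "(complex \<Rightarrow> complex \<Rightarrow> complex \<Rightarrow> complex) \<Rightarrow> complex \<Rightarrow> complex \<Rightarrow> complex \<Rightarrow> complex" where
  "hess3 f x y z = det3 (\<lambda>i j. pd3 i (pd3 j f) x y z)"

end

theory Submission
  imports Defs
begin

lemma f2: "form3 2 a x y z = a 0 0 * z^2 + a 0 1 * y*z + a 0 2 * y^2 + a 1 0 * x*z + a 1 1 * x*y + a 2 0 * x^2"
  by (simp add: form3_def eval_nat_numeral algebra_simps)

lemma red1:
  assumes irr: "irreducible_form3 4 q" and h: "\<And>x y z. form3 4 q x y z = C*z^4 + D*x^2*y^2"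
  shows False
proof -
  define s where "s = csqrt C"
  define t where "t = csqrt (-D)"
  define a where "a = (\<lambda>(i::nat) (j::nat). if i = 0 \<and> j = 0 then s else if i = 1 \<and> j = 1 then t else 0)"
  define b where "b = (\<lambda>(i::nat) (j::nat). if i = 0 \<and> j = 0 then s else if i = 1 \<and> j = 1 then -t else 0)"
  have s2: "s^2 = C" and t2: "t^2 = -D" by (simp_all add: s_def t_def)
  have "\<forall>x y z. form3 4 q x y z = form3 2 a x y z * form3 (4-2) b x y z"
  proof (intro allI)
    fix x y z
    have "form3 2 a x y z * form3 2 b x y z = s^2 * z^4 - t^2 * x^2*y^2"
      by (simp add: f2 a_def b_def algebra_simps power2_eq_square power4_eq_xxxx)
    thus "form3 4 q x y z = form3 2 a x y z * form3 (4-2) b x y z"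
      by (simp add: h s2 t2)
  qed
  moreover have "(0::nat) < 2 \<and> (2::nat) < 4" by simp
  ultimately show False using irr unfolding irreducible_form3_def by blast
qed

lemma red2:
  assumes irr: "irreducible_form3 4 q" and h: "\<And>x y z. form3 4 q x y z = B*y^4 + E*x^2*z^2"
  shows False
proof -
  define s where "s = csqrt B"
  define t where "t = csqrt (-E)"
  define a where "a = (\<lambda>(i::nat) (j::nat). if i = 0 \<and> j = 2 then s else if i = 1 \<and> j = 0 then t else 0)"
  define b where "b = (\<lambda>(i::nat) (j::nat). if i = 0 \<and> j = 2 then s else if i = 1 \<and> j = 0 then -t else 0)"
  have s2: "s^2 = B" and t2: "t^2 = -E" by (simp_all add: s_def t_def)
  have "\<forall>x y z. form3 4 q x y z = form3 2 a x y z * form3 (4-2) b x y z"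
  proof (intro allI)
    fix x y z
    have "form3 2 a x y z * form3 2 b x y z = s^2 * y^4 - t^2 * x^2*z^2"
      by (simp add: f2 a_def b_def algebra_simps power2_eq_square power4_eq_xxxx)
    thus "form3 4 q x y z = form3 2 a x y z * form3 (4-2) b x y z"
      by (simp add: h s2 t2)
  qed
  moreover have "(0::nat) < 2 \<and> (2::nat) < 4" by simp
  ultimately show False using irr unfolding irreducible_form3_def by blast
qed

lemma red3:
  assumes irr: "irreducible_form3 4 q" and h: "\<And>x y z. form3 4 q x y z = A*x^4 + F*y^2*z^2"
  shows False
proof -
  define s where "s = csqrt A"
  define t where "t = csqrt (-F)"
  define a where "a = (\<lambda>(i::nat) (j::nat). if i = 2 \<and> j = 0 then s else if i = 0 \<and> j = 1 then t else 0)"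
  define b where "b = (\<lambda>(i::nat) (j::nat). if i = 2 \<and> j = 0 then s else if i = 0 \<and> j = 1 then -t else 0)"
  have s2: "s^2 = A" and t2: "t^2 = -F" by (simp_all add: s_def t_def)
  have "\<forall>x y z. form3 4 q x y z = form3 2 a x y z * form3 (4-2) b x y z"
  proof (intro allI)
    fix x y z
    have "form3 2 a x y z * form3 2 b x y z = s^2 * x^4 - t^2 * y^2*z^2"
      by (simp add: f2 a_def b_def algebra_simps power2_eq_square power4_eq_xxxx)
    thus "form3 4 q x y z = form3 2 a x y z * form3 (4-2) b x y z"
      by (simp add: h s2 t2)
  qed
  moreover have "(0::nat) < 2 \<and> (2::nat) < 4" by simp
  ultimately show False using irr unfolding irreducible_form3_def by blast
qed

definition PP :: "complex \<Rightarrow> complex \<Rightarrow> complex \<Rightarrow> complex \<Rightarrow> complex \<Rightarrow> complex \<Rightarrow> complex \<Rightarrow> complex \<Rightarrow> complex \<Rightarrow> complex" where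
 "PP a b c d e f X Y Z = (a*d*e) * X^3 + (b*d*f) * Y^3 + (c*e*f)* Z^3 + (a*d*f+a*b*e-3*d^2*e) * X^2*Y + (a*b*f+b*d*e-3*d^2*f) * X*Y^2
    + (a*c*d+a*e*f-3*d*e^2) * X^2*Z + (a*c*f+c*d*e-3*e^2*f) * X*Z^2 + (b*c*d+b*e*f-3*d*f^2) * Y^2*Z
    + (c*d*f+b*c*e-3*e*f^2) * Y*Z^2 + (a*b*c-3*a*f^2-3*b*e^2-3*c*d^2+18*d*e*f) * X*Y*Z"

lemma hessQ:
  fixes A B C D E F :: complex
  defines "Q \<equiv> (\<lambda>x y z. A * x^4 + B * y^4 + C * z^4 + D * x^2*y^2 + E * x^2*z^2 + F * y^2*z^2)"
  shows "hess3 Q x y z = (let a = 12*A; b = 12*B; c = 12*C; d = 2*D; e = 2*E; f = 2*F;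
      X = x^2; Y = y^2; Z = z^2 in
      (a*d*e) * X^3 + (b*d*f) * Y^3 + (c*e*f)* Z^3 + (a*d*f+a*b*e-3*d^2*e) * X^2*Y + (a*b*f+b*d*e-3*d^2*f) * X*Y^2
    + (a*c*d+a*e*f-3*d*e^2) * X^2*Z + (a*c*f+c*d*e-3*e^2*f) * X*Z^2 + (b*c*d+b*e*f-3*d*f^2) * Y^2*Z
    + (c*d*f+b*c*e-3*e*f^2) * Y*Z^2 + (a*b*c-3*a*f^2-3*b*e^2-3*c*d^2+18*d*e*f) * X*Y*Z)"
proof -
  have p0: "pd3 0 Q = (\<lambda>x y z. 4*A*x^3 + 2*D*x*y^2 + 2*E*x*z^2)"
    unfolding pd3_def Q_def
    by (intro ext, simp, rule DERIV_imp_deriv, (rule derivative_eq_intros refl)+, simp add: algebra_simps)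
  have p1: "pd3 1 Q = (\<lambda>x y z. 4*B*y^3 + 2*D*x^2*y + 2*F*y*z^2)"
    unfolding pd3_def Q_def
    by (intro ext, simp, rule DERIV_imp_deriv, (rule derivative_eq_intros refl)+, simp add: algebra_simps)
  have p2: "pd3 2 Q = (\<lambda>x y z. 4*C*z^3 + 2*E*x^2*z + 2*F*y^2*z)"
    unfolding pd3_def Q_def
    by (intro ext, simp, rule DERIV_imp_deriv, (rule derivative_eq_intros refl)+, simp add: algebra_simps)
  have s00: "pd3 0 (pd3 0 Q) x y z = 12*A*x^2 + 2*D*y^2 + 2*E*z^2"
    by (simp only: p0, simp add: pd3_def, rule DERIV_imp_deriv, (rule derivative_eq_intros refl)+, simp add: algebra_simps)
  have s01: "pd3 0 (pd3 1 Q) x y z = 4*D*x*y"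
    by (simp only: p1, simp add: pd3_def, rule DERIV_imp_deriv, (rule derivative_eq_intros refl)+, simp add: algebra_simps)
  have s02: "pd3 0 (pd3 2 Q) x y z = 4*E*x*z"
    by (simp only: p2, simp add: pd3_def, rule DERIV_imp_deriv, (rule derivative_eq_intros refl)+, simp add: algebra_simps)
  have s10: "pd3 1 (pd3 0 Q) x y z = 4*D*x*y"
    by (simp only: p0, simp add: pd3_def, rule DERIV_imp_deriv, (rule derivative_eq_intros refl)+, simp add: algebra_simps)
  have s11: "pd3 1 (pd3 1 Q) x y z = 12*B*y^2 + 2*D*x^2 + 2*F*z^2"
    by (simp only: p1, simp add: pd3_def, rule DERIV_imp_deriv, (rule derivative_eq_intros refl)+, simp add: algebra_simps)
  have s12: "pd3 1 (pd3 2 Q) x y z = 4*F*y*z"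
    by (simp only: p2, simp add: pd3_def, rule DERIV_imp_deriv, (rule derivative_eq_intros refl)+, simp add: algebra_simps)
  have s20: "pd3 2 (pd3 0 Q) x y z = 4*E*x*z"
    by (simp only: p0, simp add: pd3_def, rule DERIV_imp_deriv, (rule derivative_eq_intros refl)+, simp add: algebra_simps)
  have s21: "pd3 2 (pd3 1 Q) x y z = 4*F*y*z"
    by (simp only: p1, simp add: pd3_def, rule DERIV_imp_deriv, (rule derivative_eq_intros refl)+, simp add: algebra_simps)
  have s22: "pd3 2 (pd3 2 Q) x y z = 12*C*z^2 + 2*E*x^2 + 2*F*y^2"
    by (simp only: p2, simp add: pd3_def, rule DERIV_imp_deriv, (rule derivative_eq_intros refl)+, simp add: algebra_simps)
  show ?thesis unfolding hess3_def det3_def s00 s01 s02 s10 s11 s12 s20 s21 s22 Let_def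
    by (simp add: algebra_simps power2_eq_square power3_eq_cube)
qed

lemma hessQ':
  "hess3 (\<lambda>x y z. A * x^4 + B * y^4 + C * z^4 + D * x^2*y^2 + E * x^2*z^2 + F * y^2*z^2) x y z
    = PP (12*A) (12*B) (12*C) (2*D) (2*E) (2*F) (x^2) (y^2) (z^2)"
  unfolding hessQ PP_def Let_def by simp

lemma f4: "form3 4 q x y z = q 0 0 * z^4 + q 0 1 * y * z^3 + q 0 2 * y^2*z^2 + q 0 3 * y^3 * z + q 0 4 * y^4
  + q 1 0 * x * z^3 + q 1 1 * x*y*z^2 + q 1 2 * x*y^2*z + q 1 3 * x*y^3
  + q 2 0 * x^2*z^2 + q 2 1 * x^2*y*z + q 2 2 * x^2*y^2 + q 3 0 * x^3*z + q 3 1 * x^3*y + q 4 0 * x^4"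
  by (simp add: form3_def eval_nat_numeral algebra_simps)

lemma even_part:
  assumes G8_inv: "\<forall>a\<in>{-1,1}. \<forall>b\<in>{-1,1}. \<forall>c\<in>{-1,1}. \<forall>x y z.
                     form3 4 q (a * x) (b * y) (c * z) = form3 4 q x y z"
  shows "form3 4 q x y z = q 4 0 * x^4 + q 0 4 * y^4 + q 0 0 * z^4 + q 2 2 * x^2*y^2 + q 2 0 * x^2*z^2 + q 0 2 * y^2*z^2"
proof -
  let ?f = "form3 4 q"
  have "8 * ?f x y z = ?f x y z + ?f (-x) y z + ?f x (-y) z + ?f x y (-z)
     + ?f (-x) (-y) z + ?f (-x) y (-z) + ?f x (-y) (-z) + ?f (-x) (-y) (-z)"
    using G8_inv[rule_format, of "-1" "-1" "-1" x y z] G8_inv[rule_format, of "-1" "-1" "1" x y z]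
      G8_inv[rule_format, of "-1" "1" "-1" x y z] G8_inv[rule_format, of "-1" "1" "1" x y z]
      G8_inv[rule_format, of "1" "-1" "-1" x y z] G8_inv[rule_format, of "1" "-1" "1" x y z]
      G8_inv[rule_format, of "1" "1" "-1" x y z]
    by simp
  also have "\<dots> = 8 * (q 4 0 * x^4 + q 0 4 * y^4 + q 0 0 * z^4 + q 2 2 * x^2*y^2 + q 2 0 * x^2*z^2 + q 0 2 * y^2*z^2)"
    unfolding f4 by (simp add: algebra_simps)
  finally have "8 * ?f x y z = 8 * (q 4 0 * x^4 + q 0 4 * y^4 + q 0 0 * z^4 + q 2 2 * x^2*y^2 + q 2 0 * x^2*z^2 + q 0 2 * y^2*z^2)" .
  thus ?thesis by (metis mult_left_cancel zero_neq_numeral)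
qed

lemma lin2:
  fixes p r :: complex
  assumes "p + r = 0" and "16 * p + 4 * r = 0" shows "p = 0 \<and> r = 0"
proof -
  have "r = -p" using assms(1) by (simp add: eq_neg_iff_add_eq_0 add.commute)
  with assms(2) have "12 * p = 0" by simp
  thus ?thesis using \<open>r = -p\<close> by simp
qed

theorem theorem2p3:
  fixes q :: "nat \<Rightarrow> nat \<Rightarrow> complex"
  assumes G8_inv: "\<forall>a\<in>{-1,1}. \<forall>b\<in>{-1,1}. \<forall>c\<in>{-1,1}. \<forall>x y z.
                     form3 4 q (a * x) (b * y) (c * z) = form3 4 q x y z"
    and irred: "irreducible_form3 4 q"
    and hess: "\<forall>x y z. hess3 (form3 4 q) x y z = x\<^sup>2 * y\<^sup>2 * z\<^sup>2"
  shows "\<exists>A B C. (\<forall>x y z. form3 4 q x y z = A * x ^ 4 + B * y ^ 4 + C * z ^ 4)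
                 \<and> A * B * C = 1 / 1728"
proof -
  define A where "A = q 4 0"
  define B where "B = q 0 4"
  define C where "C = q 0 0"
  define D where "D = q 2 2"
  define E where "E = q 2 0"
  define F where "F = q 0 2"
  have fq: "\<And>x y z. form3 4 q x y z = A * x^4 + B * y^4 + C * z^4 + D * x^2*y^2 + E * x^2*z^2 + F * y^2*z^2"
    using even_part[OF G8_inv] by (simp add: A_def B_def C_def D_def E_def F_def)
  hence fq': "form3 4 q = (\<lambda>x y z. A * x^4 + B * y^4 + C * z^4 + D * x^2*y^2 + E * x^2*z^2 + F * y^2*z^2)"
    by (intro ext) simp
  define a where "a = 12*A"
  define b where "b = 12*B"
  define c where "c = 12*C"
  define d where "d = 2*D"
  define e where "e = 2*E"
  define f where "f = 2*F"
  have H: "\<And>x y z. PP a b c d e f (x^2) (y^2) (z^2) = x^2 * y^2 * z^2"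
    using hess unfolding fq' hessQ' a_def b_def c_def d_def e_def f_def by simp
  have c1: "a*d*e = 0" using H[of 1 0 0] by (simp add: PP_def)
  have c2: "b*d*f = 0" using H[of 0 1 0] by (simp add: PP_def)
  have c3: "c*e*f = 0" using H[of 0 0 1] by (simp add: PP_def)
  have L1: "(a*d*f+a*b*e-3*d^2*e) + (a*b*f+b*d*e-3*d^2*f) = 0"
    using H[of 1 1 0] c1 c2 by (simp add: PP_def)
  have "64*(a*d*e) + 16*(a*d*f+a*b*e-3*d^2*e) + 4*(a*b*f+b*d*e-3*d^2*f) + (b*d*f) = 0"
    using H[of 2 1 0] by (simp add: PP_def algebra_simps)
  hence M1: "16*(a*d*f+a*b*e-3*d^2*e) + 4*(a*b*f+b*d*e-3*d^2*f) = 0" by (simp only: c1 c2, simp)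
  from L1 M1 have c4: "a*d*f+a*b*e-3*d^2*e = 0" and c5: "a*b*f+b*d*e-3*d^2*f = 0"
    using lin2 by (blast, blast)
  have L2: "(a*c*d+a*e*f-3*d*e^2) + (a*c*f+c*d*e-3*e^2*f) = 0"
    using H[of 1 0 1] c1 c3 by (simp add: PP_def)
  have "64*(a*d*e) + 16*(a*c*d+a*e*f-3*d*e^2) + 4*(a*c*f+c*d*e-3*e^2*f) + (c*e*f) = 0"
    using H[of 2 0 1] by (simp add: PP_def algebra_simps)
  hence M2: "16*(a*c*d+a*e*f-3*d*e^2) + 4*(a*c*f+c*d*e-3*e^2*f) = 0" by (simp only: c1 c3, simp)
  from L2 M2 have c6: "a*c*d+a*e*f-3*d*e^2 = 0" and c7: "a*c*f+c*d*e-3*e^2*f = 0"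
    using lin2 by (blast, blast)
  have L3: "(b*c*d+b*e*f-3*d*f^2) + (c*d*f+b*c*e-3*e*f^2) = 0"
    using H[of 0 1 1] c2 c3 by (simp add: PP_def)
  have "64*(b*d*f) + 16*(b*c*d+b*e*f-3*d*f^2) + 4*(c*d*f+b*c*e-3*e*f^2) + (c*e*f) = 0"
    using H[of 0 2 1] by (simp add: PP_def algebra_simps)
  hence M3: "16*(b*c*d+b*e*f-3*d*f^2) + 4*(c*d*f+b*c*e-3*e*f^2) = 0" by (simp only: c2 c3, simp)
  from L3 M3 have c8: "b*c*d+b*e*f-3*d*f^2 = 0" and c9: "c*d*f+b*c*e-3*e*f^2 = 0"
    using lin2 by (blast, blast)
  have c10: "a*b*c-3*a*f^2-3*b*e^2-3*c*d^2+18*d*e*f = 1"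
    using H[of 1 1 1] c1 c2 c3 c4 c5 c6 c7 c8 c9 by (simp add: PP_def)
  have nde: "\<not> (d \<noteq> 0 \<and> e \<noteq> 0)"
  proof
    assume h: "d \<noteq> 0 \<and> e \<noteq> 0"
    with c1 have "a = 0" by simp
    with c4 h show False by simp
  qed
  have ndf: "\<not> (d \<noteq> 0 \<and> f \<noteq> 0)"
  proof
    assume h: "d \<noteq> 0 \<and> f \<noteq> 0"
    with c2 have "b = 0" by simp
    with c5 h show False by simp
  qed
  have nef: "\<not> (e \<noteq> 0 \<and> f \<noteq> 0)"
  proof
    assume h: "e \<noteq> 0 \<and> f \<noteq> 0"
    with c3 have "c = 0" by simp
    with c7 h show False by simp
  qed
  have d0: "d = 0"
  proof (rule ccontr)
    assume h: "d \<noteq> 0"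
    with nde ndf have ef: "e = 0" "f = 0" by auto
    with c10 have "a*b*c - 3*c*d^2 = 1" by simp
    hence "c \<noteq> 0" by auto
    with c6 c8 h ef have "a = 0" "b = 0" by auto
    hence "\<And>x y z. form3 4 q x y z = C*z^4 + D*x^2*y^2"
      using fq ef by (simp add: a_def b_def e_def f_def)
    thus False using red1[OF irred] by blast
  qed
  have e0: "e = 0"
  proof (rule ccontr)
    assume h: "e \<noteq> 0"
    with nde nef have df: "d = 0" "f = 0" by auto
    with c10 have "a*b*c - 3*b*e^2 = 1" by simp
    hence "b \<noteq> 0" by auto
    with c4 c9 h df have "a = 0" "c = 0" by auto
    hence "\<And>x y z. form3 4 q x y z = B*y^4 + E*x^2*z^2"
      using fq df by (simp add: a_def c_def d_def f_def)
    thus False using red2[OF irred] by blast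
  qed
  have f0: "f = 0"
  proof (rule ccontr)
    assume h: "f \<noteq> 0"
    with ndf nef have de: "d = 0" "e = 0" by auto
    with c10 have "a*b*c - 3*a*f^2 = 1" by simp
    hence "a \<noteq> 0" by auto
    with c5 c7 h de have "b = 0" "c = 0" by auto
    hence "\<And>x y z. form3 4 q x y z = A*x^4 + F*y^2*z^2"
      using fq de by (simp add: b_def c_def d_def e_def)
    thus False using red3[OF irred] by blast
  qed
  have "a*b*c = 1" using c10 d0 e0 f0 by simp
  hence "A*B*C = 1/1728" by (simp add: a_def b_def c_def field_simps)
  moreover have "\<forall>x y z. form3 4 q x y z = A * x ^ 4 + B * y ^ 4 + C * z ^ 4"
    using fq d0 e0 f0 by (simp add: d_def e_def f_def)
  ultimately show ?thesis by blast
qed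
end
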